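(* Let $\mathcal{C}$ be a perfect k-category. Then every full, non-empty, closed subcategory of $\mathcal{C}$ (with the subspace topologies) is perfect.
   Context: A k-category is a small category whose object and morphism sets are k-spaces (compactly generated Hausdorff) such that the source, target, identity and composition maps are continuous. A non-empty k-category $\mathcal{C}$ is perfect when the map $\mathrm{Mor}(\mathcal{C})\to\mathrm{Ob}(\mathcal{C})\times\mathrm{Ob}(\mathcal{C})$, $f\mapsto(\text{source}(f),\text{target}(f))$, is a homeomorphism (product in k-spaces). *)

theory Defs
  imports "HOL-Analysis.Analysis"
begin

text \<open>k-spaces in the sense of the paper: compactly generated Hausdorff spaces.\<close>
definition kHaus_space :: "'a topology \<Rightarrow> bool" where
  "kHaus_space X \<longleftrightarrow> k_space X \<and> Hausdorff_space X"

definition kprod :: "'a topology \<Rightarrow> 'b topology \<Rightarrow> ('a \<times> 'b) topology" where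
  "kprod X Y = kification (prod_topology X Y)"

text \<open>A (small) category with topologised object and morphism sets.
  Objects are the points of ObT, morphisms the points of MorT;
  comp g f is the composite g \<circ> f, defined when src g = tgt f.\<close>
record ('o, 'm) tcat =
  ObT  :: "'o topology"
  MorT :: "'m topology"
  src  :: "'m \<Rightarrow> 'o"
  tgt  :: "'m \<Rightarrow> 'o"
  idm  :: "'o \<Rightarrow> 'm"
  comp :: "'m \<Rightarrow> 'm \<Rightarrow> 'm"

definition Obs :: "('o, 'm) tcat \<Rightarrow> 'o set" where
  "Obs C = topspace (ObT C)"

definition Mors :: "('o, 'm) tcat \<Rightarrow> 'm set" where
  "Mors C = topspace (MorT C)"

definition composable :: "('o, 'm) tcat \<Rightarrow> ('m \<times> 'm) set" where
  "composable C = {(g, f). g \<in> Mors C \<and> f \<in> Mors C \<and> src C g = tgt C f}"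

definition is_category :: "('o, 'm) tcat \<Rightarrow> bool" where
  "is_category C \<longleftrightarrow>
     (\<forall>f\<in>Mors C. src C f \<in> Obs C \<and> tgt C f \<in> Obs C) \<and>
     (\<forall>x\<in>Obs C. idm C x \<in> Mors C \<and> src C (idm C x) = x \<and> tgt C (idm C x) = x) \<and>
     (\<forall>(g, f)\<in>composable C. comp C g f \<in> Mors C \<and>
         src C (comp C g f) = src C f \<and> tgt C (comp C g f) = tgt C g) \<and>
     (\<forall>f\<in>Mors C. comp C f (idm C (src C f)) = f \<and> comp C (idm C (tgt C f)) f = f) \<and>
     (\<forall>h\<in>Mors C. \<forall>g\<in>Mors C. \<forall>f\<in>Mors C. src C h = tgt C g \<longrightarrow> src C g = tgt C f \<longrightarrow>
         comp C h (comp C g f) = comp C (comp C h g) f)"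

definition kcategory :: "('o, 'm) tcat \<Rightarrow> bool" where
  "kcategory C \<longleftrightarrow> is_category C \<and>
     kHaus_space (ObT C) \<and> kHaus_space (MorT C) \<and>
     continuous_map (MorT C) (ObT C) (src C) \<and>
     continuous_map (MorT C) (ObT C) (tgt C) \<and>
     continuous_map (ObT C) (MorT C) (idm C) \<and>
     continuous_map (subtopology (kprod (MorT C) (MorT C)) (composable C)) (MorT C)
        (\<lambda>(g, f). comp C g f)"

definition perfect_kcategory :: "('o, 'm) tcat \<Rightarrow> bool" where
  "perfect_kcategory C \<longleftrightarrow> kcategory C \<and> Obs C \<noteq> {} \<and>
     homeomorphic_map (MorT C) (kprod (ObT C) (ObT C)) (\<lambda>f. (src C f, tgt C f))"

definition full_mors :: "('o, 'm) tcat \<Rightarrow> 'o set \<Rightarrow> 'm set" where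
  "full_mors C D = {f \<in> Mors C. src C f \<in> D \<and> tgt C f \<in> D}"

definition full_subcat :: "('o, 'm) tcat \<Rightarrow> 'o set \<Rightarrow> ('o, 'm) tcat" where
  "full_subcat C D = C\<lparr> ObT := subtopology (ObT C) D,
                        MorT := subtopology (MorT C) (full_mors C D) \<rparr>"

definition full_nonempty_closed_subcat :: "('o, 'm) tcat \<Rightarrow> 'o set \<Rightarrow> bool" where
  "full_nonempty_closed_subcat C D \<longleftrightarrow>
     D \<subseteq> Obs C \<and> D \<noteq> {} \<and> closedin (ObT C) D \<and> closedin (MorT C) (full_mors C D)"

end

theory Submission
  imports Defs
begin

lemma kification_closed_subtopology:
  assumes A: "closedin X A"
  shows "kification (subtopology X A) = subtopology (kification X) A"
  unfolding openin_inject [symmetric]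
proof (rule ext, rule iffI)
  fix U assume U: "openin (kification (subtopology X A)) U"
  then have Usub: "U \<subseteq> topspace X \<inter> A"
    by (simp add: openin_kification)
  define V where "V = U \<union> (topspace X - A)"
  have "openin (kification X) V"
    unfolding openin_kification
  proof (intro conjI allI impI)
    show "V \<subseteq> topspace X" using Usub by (auto simp: V_def)
    fix K assume K: "compactin X K"
    have KT: "K \<subseteq> topspace X" using K compactin_subset_topspace by blast
    have "compactin X (K \<inter> A)" using K A closed_Int_compactin by (metis inf_commute)
    then have "compactin (subtopology X A) (K \<inter> A)"
      by (simp add: compactin_subtopology)
    with U have "openin (subtopology (subtopology X A) (K \<inter> A)) ((K \<inter> A) \<inter> U)"
      by (simp add: openin_kification)
    then obtain W where W: "openin X W" "(K \<inter> A) \<inter> U = W \<inter> (A \<inter> (K \<inter> A))"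
      by (auto simp: subtopology_subtopology openin_subtopology)
    have "openin X (W \<union> (topspace X - A))" using W(1) A by blast
    then have "openin (subtopology X K) (K \<inter> (W \<union> (topspace X - A)))"
      by (rule openin_subtopology_Int2)
    moreover have "K \<inter> (W \<union> (topspace X - A)) = K \<inter> V"
      using W(2) KT Usub by (auto simp: V_def)
    ultimately show "openin (subtopology X K) (K \<inter> V)" by simp
  qed
  moreover have "U = V \<inter> A" using Usub by (auto simp: V_def)
  ultimately show "openin (subtopology (kification X) A) U"
    by (auto simp: openin_subtopology)
next
  fix U assume "openin (subtopology (kification X) A) U"
  then show "openin (kification (subtopology X A)) U"
    by (rule subtopology_kification_finer)
qed


lemma cat_comp: assumes "is_category C" "(g,f) \<in> composable C"
  shows "comp C g f \<in> Mors C \<and> src C (comp C g f) = src C f \<and> tgt C (comp C g f) = tgt C g"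
proof -
  have "\<forall>(g, f)\<in>composable C. comp C g f \<in> Mors C \<and>
         src C (comp C g f) = src C f \<and> tgt C (comp C g f) = tgt C g"
    using assms(1) unfolding is_category_def by (elim conjE)
  from bspec[OF this assms(2)] show ?thesis by simp
qed

theorem mainTheorem6:
  fixes C :: "('o, 'm) tcat" and D :: "'o set"
  assumes "perfect_kcategory C"
    and "full_nonempty_closed_subcat C D"
  shows "perfect_kcategory (full_subcat C D)"
proof -
  define Ob where "Ob = ObT C"
  define Mo where "Mo = MorT C"
  define F where "F = full_mors C D"
  define S where "S = full_subcat C D"
  have kc: "kcategory C" and ne: "Obs C \<noteq> {}"
    and hom: "homeomorphic_map Mo (kprod Ob Ob) (\<lambda>f. (src C f, tgt C f))"
    using assms(1) by (auto simp: perfect_kcategory_def Mo_def Ob_def)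
  have cat: "is_category C" and kO: "kHaus_space Ob" and kM: "kHaus_space Mo"
    and cs: "continuous_map Mo Ob (src C)" and ct: "continuous_map Mo Ob (tgt C)"
    and ci: "continuous_map Ob Mo (idm C)"
    and cc: "continuous_map (subtopology (kprod Mo Mo) (composable C)) Mo (\<lambda>(g, f). comp C g f)"
    using kc by (auto simp: kcategory_def Mo_def Ob_def)
  have DO: "D \<subseteq> Obs C" and Dne: "D \<noteq> {}" and Dc: "closedin Ob D" and Fc: "closedin Mo F"
    using assms(2) by (auto simp: full_nonempty_closed_subcat_def Ob_def Mo_def F_def)
  have FM: "F \<subseteq> Mors C" by (auto simp: F_def full_mors_def)
  have S_simps: "ObT S = subtopology Ob D" "MorT S = subtopology Mo F" "src S = src C" "tgt S = tgt C"
     "idm S = idm C" "comp S = comp C"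
    by (simp_all add: S_def full_subcat_def Ob_def Mo_def F_def)
  have ObsS: "Obs S = D" using DO by (auto simp: Obs_def S_simps Ob_def)
  have MorsS: "Mors S = F" using FM by (auto simp: Mors_def S_simps Mo_def)
  have compS: "composable S = composable C \<inter> (F \<times> F)"
    by (auto simp: composable_def MorsS S_simps FM[THEN subsetD])
  have catS: "is_category S"
    using cat FM DO unfolding is_category_def MorsS ObsS S_simps compS
    by (auto simp: F_def full_mors_def composable_def)
  have kOS: "kHaus_space (subtopology Ob D)"
    using kO Dc by (simp add: kHaus_space_def k_space_closed_subtopology Hausdorff_space_subtopology)
  have kMS: "kHaus_space (subtopology Mo F)"
    using kM Fc by (simp add: kHaus_space_def k_space_closed_subtopology Hausdorff_space_subtopology)
  have srcF: "f \<in> F \<Longrightarrow> src C f \<in> D \<and> tgt C f \<in> D" for f by (simp add: F_def full_mors_def)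
  have csS: "continuous_map (subtopology Mo F) (subtopology Ob D) (src C)"
    using cs srcF by (auto simp: continuous_map_in_subtopology continuous_map_from_subtopology)
  have ctS: "continuous_map (subtopology Mo F) (subtopology Ob D) (tgt C)"
    using ct srcF by (auto simp: continuous_map_in_subtopology continuous_map_from_subtopology)
  have idF: "x \<in> D \<Longrightarrow> idm C x \<in> F" for x
    using cat DO by (auto simp: is_category_def F_def full_mors_def Obs_def)
  have ciS: "continuous_map (subtopology Ob D) (subtopology Mo F) (idm C)"
    using ci idF by (auto simp: continuous_map_in_subtopology continuous_map_from_subtopology)
  have FF: "closedin (prod_topology Mo Mo) (F \<times> F)"
    using Fc by (simp add: closedin_prod_Times_iff)
  have kpS: "kprod (subtopology Mo F) (subtopology Mo F) = subtopology (kprod Mo Mo) (F \<times> F)"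
    unfolding kprod_def subtopology_Times[symmetric] using FF by (rule kification_closed_subtopology)
  have compSsub: "composable S \<subseteq> F \<times> F" using compS by blast
  have ccS: "continuous_map (subtopology (kprod (subtopology Mo F) (subtopology Mo F)) (composable S))
       (subtopology Mo F) (\<lambda>(g, f). comp C g f)"
  proof -
    have e: "subtopology (kprod (subtopology Mo F) (subtopology Mo F)) (composable S)
          = subtopology (subtopology (kprod Mo Mo) (composable C)) (composable S)"
      using compSsub compS unfolding kpS subtopology_subtopology
      by (metis Int_absorb1 inf_commute inf_le1)
    have "continuous_map (subtopology (subtopology (kprod Mo Mo) (composable C)) (composable S)) Mo
        (\<lambda>(g, f). comp C g f)"
      using cc by (rule continuous_map_from_subtopology)
    moreover have "(\<lambda>(g, f). comp C g f) \<in> composable S \<rightarrow> F"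
    proof
      fix p assume p: "p \<in> composable S"
      then obtain g f where gf: "p = (g, f)" "(g, f) \<in> composable C" "g \<in> F" "f \<in> F"
        using compS by auto
      have "comp C g f \<in> Mors C \<and> src C (comp C g f) = src C f \<and> tgt C (comp C g f) = tgt C g"
        using cat_comp[OF cat gf(2)] .
      then have "comp C g f \<in> full_mors C D" unfolding full_mors_def
        using srcF[OF gf(4)] srcF[OF gf(3)] by simp
      then show "(\<lambda>(g, f). comp C g f) p \<in> F" unfolding gf(1) F_def by simp
    qed
    ultimately show ?thesis unfolding e
      unfolding continuous_map_in_subtopology topspace_subtopology Pi_iff by blast
  qed
  have kcS: "kcategory S"
    unfolding kcategory_def S_simps
    using catS kOS kMS csS ctS ciS ccS unfolding MorsS by simp
  have DD: "closedin (prod_topology Ob Ob) (D \<times> D)"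
    using Dc by (simp add: closedin_prod_Times_iff)
  have kpD: "kprod (subtopology Ob D) (subtopology Ob D) = subtopology (kprod Ob Ob) (D \<times> D)"
    unfolding kprod_def subtopology_Times[symmetric] using DD by (rule kification_closed_subtopology)
  have img: "(\<lambda>f. (src C f, tgt C f)) ` (topspace Mo \<inter> F) = topspace (kprod Ob Ob) \<inter> (D \<times> D)"
  proof
    show "(\<lambda>f. (src C f, tgt C f)) ` (topspace Mo \<inter> F) \<subseteq> topspace (kprod Ob Ob) \<inter> (D \<times> D)"
      using hom srcF homeomorphic_imp_surjective_map by blast
    show "topspace (kprod Ob Ob) \<inter> (D \<times> D) \<subseteq> (\<lambda>f. (src C f, tgt C f)) ` (topspace Mo \<inter> F)"
    proof
      fix p assume p: "p \<in> topspace (kprod Ob Ob) \<inter> (D \<times> D)"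
      have "(\<lambda>f. (src C f, tgt C f)) ` topspace Mo = topspace (kprod Ob Ob)"
        using hom homeomorphic_imp_surjective_map by blast
      with p obtain f where f: "f \<in> topspace Mo" "p = (src C f, tgt C f)" by blast
      with p have "f \<in> F" by (auto simp: F_def full_mors_def Mors_def Mo_def)
      with f show "p \<in> (\<lambda>f. (src C f, tgt C f)) ` (topspace Mo \<inter> F)" by blast
    qed
  qed
  have homS: "homeomorphic_map (subtopology Mo F) (kprod (subtopology Ob D) (subtopology Ob D))
      (\<lambda>f. (src C f, tgt C f))"
    unfolding kpD using hom img by (rule homeomorphic_map_subtopologies)
  show ?thesis
    unfolding S_def[symmetric] perfect_kcategory_def
    using kcS Dne homS by (simp add: ObsS S_simps)
qed

end
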